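(* In the setting below, assume moreover $\alpha_3\neq0$. The map $(\rho,t)\mapsto(t,g(\rho,t))$ (projection of the multivalued solution $N$ to the $(t,x)$-plane) is singular exactly at the points where $\partial g/\partial\rho=0$, and these are precisely the points with $$t=\frac{\pm A(\rho)(\rho+\alpha_3)^2-\alpha_1\alpha_3+\alpha_0}{\alpha_3\alpha_2}.$$ At such a point (with the same choice of sign), $$x=g(\rho,t)=-\frac{G(\rho)}{\alpha_2}+\frac{\rho(\rho+2\alpha_3)(\rho+\alpha_3)^2A(\rho)^2-\alpha_3^2\alpha_1^2+\alpha_0^2\pm2\alpha_0(\rho+\alpha_3)^2A(\rho)}{2\alpha_3^2\alpha_2}.$$ Thus the caustic is the union of the two curves parametrized by $\rho$ given by these formulas.
   Context: Setting: $p\colon(0,\infty)\to\mathbb{R}$ smooth with $p'>0$, $A(\rho)=\rho^{-1}\sqrt{p'(\rho)}$; constants $\alpha_0,\alpha_1,\alpha_2,\alpha_3$ with $\alpha_2\neq0$; $G$ an antiderivative of $A(\rho)^2(\rho+\alpha_3)$ on an interval $I\subset(0,\infty)$ not containing $-\alpha_3$; $$g(\rho,t)=-\frac{G(\rho)}{\alpha_2}+\frac{\alpha_2^2t^2\rho(\rho+2\alpha_3)+2t\alpha_2\bigl(\alpha_3(\alpha_0+2\alpha_1\rho)+\alpha_1\rho^2\bigr)-(\alpha_0-\alpha_1\alpha_3)^2}{2\alpha_2(\rho+\alpha_3)^2},$$ $U(\rho,t)=\frac{\alpha_2\rho t+\alpha_1\rho+\alpha_0}{\rho+\alpha_3}$.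 The surface $N=\{(t,g(\rho,t),U(\rho,t),\rho)\}$ in the space with coordinates $(t,x,u,\rho)$ is a multivalued solution of the one-dimensional Euler system $\rho_t+(\rho u)_x=0$, $u_t+uu_x+\frac{p'(\rho)}{\rho}\rho_x=0$. The caustic is the set of points where the projection of $N$ to the $(t,x)$-plane is singular. *)

theory Defs
  imports "HOL-Analysis.Analysis"
begin

definition Aof :: "(real \<Rightarrow> real) \<Rightarrow> real \<Rightarrow> real" where
  "Aof p \<rho> = sqrt (deriv p \<rho>) / \<rho>"

definition gfun :: "(real \<Rightarrow> real) \<Rightarrow> real \<Rightarrow> real \<Rightarrow> real \<Rightarrow> real \<Rightarrow> real \<Rightarrow> real \<Rightarrow> real" where
  "gfun G a0 a1 a2 a3 \<rho> t =
     - G \<rho> / a2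
     + (a2^2 * t^2 * \<rho> * (\<rho> + 2*a3) + 2 * t * a2 * (a3 * (a0 + 2*a1*\<rho>) + a1 * \<rho>^2)
        - (a0 - a1*a3)^2) / (2 * a2 * (\<rho> + a3)^2)"

definition singular_at :: "(real \<times> real \<Rightarrow> real \<times> real) \<Rightarrow> real \<times> real \<Rightarrow> bool" where
  "singular_at F z \<longleftrightarrow> (\<exists>F'. (F has_derivative F') (at z) \<and> \<not> bij F')"

definition t_caus :: "(real \<Rightarrow> real) \<Rightarrow> real \<Rightarrow> real \<Rightarrow> real \<Rightarrow> real \<Rightarrow> real \<Rightarrow> real \<Rightarrow> real" where
  "t_caus p a0 a1 a2 a3 s \<rho> = (s * Aof p \<rho> * (\<rho> + a3)^2 - a1*a3 + a0) / (a3 * a2)"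

definition x_caus :: "(real \<Rightarrow> real) \<Rightarrow> (real \<Rightarrow> real) \<Rightarrow> real \<Rightarrow> real \<Rightarrow> real \<Rightarrow> real \<Rightarrow> real \<Rightarrow> real \<Rightarrow> real" where
  "x_caus p G a0 a1 a2 a3 s \<rho> =
     - G \<rho> / a2
     + (\<rho> * (\<rho> + 2*a3) * (\<rho> + a3)^2 * (Aof p \<rho>)^2 - a3^2 * a1^2 + a0^2
        + s * 2 * a0 * (\<rho> + a3)^2 * Aof p \<rho>) / (2 * a3^2 * a2)"

end

theory Submission imports Defs begin

lemma gder:
  assumes G: "(G has_real_derivative GA) (at r)" and a2: "a2 \<noteq> 0" and u: "r + a3 \<noteq> 0"
  shows "((\<lambda>z. gfun G a0 a1 a2 a3 (fst z) (snd z)) has_derivative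
     (\<lambda>h. (- GA / a2 + (a2*a3*t - (a0 - a1*a3))^2 / (a2 * (r+a3)^3)) * fst h
          + (a2*t + a1 - a3*(a2*a3*t - (a0 - a1*a3))/(r+a3)^2) * snd h)) (at (r,t))"
proof -
  have G2: "((\<lambda>z. G (fst z)) has_derivative (\<lambda>h. fst h * GA)) (at (r,t))"
    using has_derivative_compose[OF has_derivative_fst[OF has_derivative_ident], of G "(*) GA" "(r,t)"] G
    unfolding has_field_derivative_def by (simp add: mult.commute)
  define u where "u = r + a3"
  have r: "r = u - a3" and uu: "u \<noteq> 0" using u by (auto simp: u_def)
  show ?thesis
    unfolding gfun_def
    apply (rule has_derivative_eq_rhs)
     apply (rule derivative_eq_intros G2 refl | simp add: u a2)+
    apply (rule ext)
    apply (simp only: r)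
    apply (simp add: field_simps uu a2)
    apply algebra
    done
qed

lemma D1zero:
  fixes A r t a0 a1 a2 a3 :: real
  assumes a2: "a2 \<noteq> 0" and a3: "a3 \<noteq> 0" and u: "r + a3 \<noteq> 0"
  shows "(- (A^2*(r+a3)) / a2 + (a2*a3*t - (a0 - a1*a3))^2 / (a2 * (r+a3)^3) = 0) \<longleftrightarrow>
    (\<exists>s\<in>{1::real, -1}. t = (s * A * (r + a3)^2 - a1*a3 + a0) / (a3 * a2))"
proof -
  define w where "w = a2*a3*t - (a0 - a1*a3)"
  have "(- (A^2*(r+a3)) / a2 + w^2 / (a2 * (r+a3)^3) = 0) \<longleftrightarrow> w^2 = (A*(r+a3)^2)^2"
  proof -
    have e0: "\<And>x. x \<noteq> 0 \<Longrightarrow> - (A^2*x) / a2 + w^2 / (a2 * x^3) = (w^2 - (A*x^2)^2) / (a2 * x^3)"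
      using a2 by (simp add: field_simps power2_eq_square power3_eq_cube)
    have e: "- (A^2*(r+a3)) / a2 + w^2 / (a2 * (r+a3)^3) = (w^2 - (A*(r+a3)^2)^2) / (a2 * (r+a3)^3)"
      by (rule e0[OF u])
    show ?thesis unfolding e using a2 u by simp
  qed
  also have "\<dots> \<longleftrightarrow> w = A*(r+a3)^2 \<or> w = - (A*(r+a3)^2)"
    by (rule power2_eq_iff)
  also have "\<dots> \<longleftrightarrow> (\<exists>s\<in>{1::real, -1}. t = (s * A * (r + a3)^2 - a1*a3 + a0) / (a3 * a2))"
    using a2 a3 unfolding w_def by (auto simp: field_simps)
  finally show ?thesis unfolding w_def .
qed

lemma xval:
  fixes A r t a0 a1 a2 a3 s Gr :: real
  assumes a2: "a2 \<noteq> 0" and a3: "a3 \<noteq> 0" and u: "r + a3 \<noteq> 0" and s: "s * s = 1"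
    and t: "t = (s * A * (r + a3)^2 - a1*a3 + a0) / (a3 * a2)"
  shows "- Gr / a2
     + (a2^2 * t^2 * r * (r + 2*a3) + 2 * t * a2 * (a3 * (a0 + 2*a1*r) + a1 * r^2)
        - (a0 - a1*a3)^2) / (2 * a2 * (r + a3)^2) =
     - Gr / a2
     + (r * (r + 2*a3) * (r + a3)^2 * A^2 - a3^2 * a1^2 + a0^2
        + s * 2 * a0 * (r + a3)^2 * A) / (2 * a3^2 * a2)"
proof -
  define u where "u = r + a3"
  have r: "r = u - a3" and uu: "u \<noteq> 0" using u by (auto simp: u_def)
  have ss: "s^2 = 1" using s by (simp add: power2_eq_square)
  have "a2 * a3 * t = s * A * u^2 - a1*a3 + a0" using t a2 a3 by (simp add: u_def field_simps)
  hence t2: "t = (s * A * u^2 - a1*a3 + a0) / (a2*a3)" using a2 a3 by (simp add: field_simps)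
  show ?thesis unfolding t2 u_def[symmetric] unfolding r
    using uu a2 a3 apply (simp add: field_simps)
    using ss apply algebra
    done
qed

theorem mainTheorem4:
  fixes p G :: "real \<Rightarrow> real" and a0 a1 a2 a3 :: real and I :: "real set"
  assumes smooth: "\<And>n \<rho>. \<rho> > 0 \<Longrightarrow> ((deriv ^^ n) p) differentiable (at \<rho>)"
    and pos: "\<And>\<rho>. \<rho> > 0 \<Longrightarrow> deriv p \<rho> > 0"
    and a2: "a2 \<noteq> 0" and a3: "a3 \<noteq> 0"
    and I: "is_interval I" "open I" "I \<subseteq> {0<..}" "- a3 \<notin> I"
    and G: "\<And>\<rho>. \<rho> \<in> I \<Longrightarrow> (G has_real_derivative (Aof p \<rho>)^2 * (\<rho> + a3)) (at \<rho>)"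
  defines "F \<equiv> (\<lambda>(\<rho>, t). (t, gfun G a0 a1 a2 a3 \<rho> t))"
  shows "(\<forall>\<rho>\<in>I. \<forall>t.
            F differentiable (at (\<rho>, t))
          \<and> (singular_at F (\<rho>, t) \<longleftrightarrow> deriv (\<lambda>r. gfun G a0 a1 a2 a3 r t) \<rho> = 0)
          \<and> (deriv (\<lambda>r. gfun G a0 a1 a2 a3 r t) \<rho> = 0 \<longleftrightarrow>
               (\<exists>s\<in>{1, -1}. t = t_caus p a0 a1 a2 a3 s \<rho>))
          \<and> (\<forall>s\<in>{1, -1}. t = t_caus p a0 a1 a2 a3 s \<rho> \<longrightarrow>
               gfun G a0 a1 a2 a3 \<rho> t = x_caus p G a0 a1 a2 a3 s \<rho>))
       \<and> {F (\<rho>, t) | \<rho> t. \<rho> \<in> I \<and> singular_at F (\<rho>, t)}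
         = {(t_caus p a0 a1 a2 a3 s \<rho>, x_caus p G a0 a1 a2 a3 s \<rho>) | s \<rho>. s \<in> {1, -1} \<and> \<rho> \<in> I}"
  proof -
  let ?g = "\<lambda>z. gfun G a0 a1 a2 a3 (fst z) (snd z)"
  define D1 where "D1 r t = - ((Aof p r)^2 * (r + a3)) / a2 + (a2*a3*t - (a0 - a1*a3))^2 / (a2 * (r+a3)^3)" for r t
  define D2 where "D2 r t = a2*t + a1 - a3*(a2*a3*t - (a0 - a1*a3))/(r+a3)^2" for r t
  have u: "r + a3 \<noteq> 0" if "r \<in> I" for r
  proof
    assume "r + a3 = 0" then have "r = - a3" by simp
    with that I(4) show False by simp
  qed
  have hd: "(?g has_derivative (\<lambda>h. D1 r t * fst h + D2 r t * snd h)) (at (r,t))" if "r \<in> I" for r t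
    using gder[OF G[OF that] a2 u[OF that], of a0 a1 t] unfolding D1_def D2_def by simp
  have Fform: "F = (\<lambda>z. (snd z, ?g z))" unfolding F_def by (rule ext) (simp add: split_beta)
  have hF: "(F has_derivative (\<lambda>h. (snd h, D1 r t * fst h + D2 r t * snd h))) (at (r,t))" if "r \<in> I" for r t
    unfolding Fform by (rule has_derivative_Pair[OF has_derivative_snd[OF has_derivative_ident] hd[OF that]])
  have hdr: "deriv (\<lambda>r. gfun G a0 a1 a2 a3 r t) r = D1 r t" if "r \<in> I" for r t
  proof -
    have c: "((\<lambda>r. (r,t)) has_derivative (\<lambda>h. (h,0))) (at r)"
      by (intro derivative_eq_intros) auto
    have "((\<lambda>r. gfun G a0 a1 a2 a3 r t) has_derivative (*) (D1 r t)) (at r)"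
      using has_derivative_compose[OF c hd[OF that]] by simp
    hence "((\<lambda>r. gfun G a0 a1 a2 a3 r t) has_field_derivative D1 r t) (at r)"
      unfolding has_field_derivative_def .
    thus ?thesis by (rule DERIV_imp_deriv)
  qed
  have bij: "bij (\<lambda>h::real\<times>real. (snd h, d1 * fst h + d2 * snd h)) \<longleftrightarrow> d1 \<noteq> 0" for d1 d2 :: real
  proof
    assume b: "bij (\<lambda>h::real\<times>real. (snd h, d1 * fst h + d2 * snd h))"
    show "d1 \<noteq> 0"
    proof
      assume "d1 = 0"
      hence "(\<lambda>h::real\<times>real. (snd h, d1 * fst h + d2 * snd h)) (1,0) = (\<lambda>h::real\<times>real. (snd h, d1 * fst h + d2 * snd h)) (0,0)" by simp
      from injD[OF bij_is_inj[OF b] this] show False by simp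
    qed
  next
    assume d: "d1 \<noteq> 0"
    show "bij (\<lambda>h::real\<times>real. (snd h, d1 * fst h + d2 * snd h))"
    proof (rule bijI)
      show "inj (\<lambda>h::real\<times>real. (snd h, d1 * fst h + d2 * snd h))"
        using d by (auto simp: inj_def prod_eq_iff)
      show "surj (\<lambda>h::real\<times>real. (snd h, d1 * fst h + d2 * snd h))"
      proof (rule surjI)
        fix y :: "real\<times>real"
        show "(\<lambda>h::real\<times>real. (snd h, d1 * fst h + d2 * snd h)) ((snd y - d2 * fst y)/d1, fst y) = y"
          using d by (simp add: prod_eq_iff field_simps)
      qed
    qed
  qed
  have sing: "singular_at F (r,t) \<longleftrightarrow> D1 r t = 0" if "r \<in> I" for r t
  proof -
    have "singular_at F (r,t) \<longleftrightarrow> \<not> bij (\<lambda>h::real\<times>real. (snd h, D1 r t * fst h + D2 r t * snd h))"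
      unfolding singular_at_def
    proof
      assume "\<exists>F'. (F has_derivative F') (at (r, t)) \<and> \<not> bij F'"
      then obtain F' where a: "(F has_derivative F') (at (r, t))" and nb: "\<not> bij F'" by blast
      from has_derivative_unique[OF a hF[OF that]] nb
      show "\<not> bij (\<lambda>h::real\<times>real. (snd h, D1 r t * fst h + D2 r t * snd h))" by simp
    next
      assume "\<not> bij (\<lambda>h::real\<times>real. (snd h, D1 r t * fst h + D2 r t * snd h))"
      with hF[OF that] show "\<exists>F'. (F has_derivative F') (at (r, t)) \<and> \<not> bij F'" by blast
    qed
    thus ?thesis using bij by simp
  qed
  have caus: "D1 r t = 0 \<longleftrightarrow> (\<exists>s\<in>{1, -1}. t = t_caus p a0 a1 a2 a3 s r)" if "r \<in> I" for r t
    unfolding D1_def t_caus_def by (rule D1zero[OF a2 a3 u[OF that]])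
  have xv: "gfun G a0 a1 a2 a3 r t = x_caus p G a0 a1 a2 a3 s r"
    if "r \<in> I" "s \<in> {1, -1}" "t = t_caus p a0 a1 a2 a3 s r" for r t s
    unfolding gfun_def x_caus_def
    by (rule xval[OF a2 a3 u[OF that(1)]]) (use that in \<open>auto simp: t_caus_def\<close>)
  have part1: "\<forall>\<rho>\<in>I. \<forall>t.
            F differentiable (at (\<rho>, t))
          \<and> (singular_at F (\<rho>, t) \<longleftrightarrow> deriv (\<lambda>r. gfun G a0 a1 a2 a3 r t) \<rho> = 0)
          \<and> (deriv (\<lambda>r. gfun G a0 a1 a2 a3 r t) \<rho> = 0 \<longleftrightarrow>
               (\<exists>s\<in>{1, -1}. t = t_caus p a0 a1 a2 a3 s \<rho>))
          \<and> (\<forall>s\<in>{1, -1}. t = t_caus p a0 a1 a2 a3 s \<rho> \<longrightarrow>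
               gfun G a0 a1 a2 a3 \<rho> t = x_caus p G a0 a1 a2 a3 s \<rho>)"
  proof (intro ballI allI)
    fix \<rho> t assume r: "\<rho> \<in> I"
    have 1: "F differentiable (at (\<rho>, t))" using hF[OF r] unfolding differentiable_def by blast
    have 2: "singular_at F (\<rho>, t) \<longleftrightarrow> deriv (\<lambda>r. gfun G a0 a1 a2 a3 r t) \<rho> = 0"
      using sing[OF r] hdr[OF r] by simp
    have 3: "deriv (\<lambda>r. gfun G a0 a1 a2 a3 r t) \<rho> = 0 \<longleftrightarrow> (\<exists>s\<in>{1, -1}. t = t_caus p a0 a1 a2 a3 s \<rho>)"
      using caus[OF r] hdr[OF r] by simp
    have 4: "\<forall>s\<in>{1, -1}. t = t_caus p a0 a1 a2 a3 s \<rho> \<longrightarrow> gfun G a0 a1 a2 a3 \<rho> t = x_caus p G a0 a1 a2 a3 s \<rho>"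
      using xv[OF r] by blast
    show "F differentiable (at (\<rho>, t))
          \<and> (singular_at F (\<rho>, t) \<longleftrightarrow> deriv (\<lambda>r. gfun G a0 a1 a2 a3 r t) \<rho> = 0)
          \<and> (deriv (\<lambda>r. gfun G a0 a1 a2 a3 r t) \<rho> = 0 \<longleftrightarrow>
               (\<exists>s\<in>{1, -1}. t = t_caus p a0 a1 a2 a3 s \<rho>))
          \<and> (\<forall>s\<in>{1, -1}. t = t_caus p a0 a1 a2 a3 s \<rho> \<longrightarrow>
               gfun G a0 a1 a2 a3 \<rho> t = x_caus p G a0 a1 a2 a3 s \<rho>)"
      using 1 2 3 4 by blast
  qed
  have part2: "{F (\<rho>, t) | \<rho> t. \<rho> \<in> I \<and> singular_at F (\<rho>, t)}
         = {(t_caus p a0 a1 a2 a3 s \<rho>, x_caus p G a0 a1 a2 a3 s \<rho>) | s \<rho>. s \<in> {1, -1} \<and> \<rho> \<in> I}"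
  proof (intro equalityI subsetI)
    fix z assume "z \<in> {F (\<rho>, t) | \<rho> t. \<rho> \<in> I \<and> singular_at F (\<rho>, t)}"
    then obtain r t where r: "r \<in> I" and sg: "singular_at F (r,t)" and z: "z = F (r,t)" by blast
    from caus[OF r] sing[OF r] sg obtain s where s: "s \<in> {1, -1}" "t = t_caus p a0 a1 a2 a3 s r" by blast
    have "z = (t_caus p a0 a1 a2 a3 s r, x_caus p G a0 a1 a2 a3 s r)"
      using z xv[OF r s] s unfolding F_def by simp
    with s r show "z \<in> {(t_caus p a0 a1 a2 a3 s \<rho>, x_caus p G a0 a1 a2 a3 s \<rho>) | s \<rho>. s \<in> {1, -1} \<and> \<rho> \<in> I}" by blast
  next
    fix z assume "z \<in> {(t_caus p a0 a1 a2 a3 s \<rho>, x_caus p G a0 a1 a2 a3 s \<rho>) | s \<rho>. s \<in> {1, -1} \<and> \<rho> \<in> I}"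
    then obtain s r where s: "s \<in> {1, -1}" and r: "r \<in> I"
      and z: "z = (t_caus p a0 a1 a2 a3 s r, x_caus p G a0 a1 a2 a3 s r)" by blast
    define t where "t = t_caus p a0 a1 a2 a3 s r"
    have sg: "singular_at F (r,t)" using sing[OF r] caus[OF r] s unfolding t_def by blast
    have "z = F (r,t)" using z xv[OF r s t_def] unfolding F_def t_def by simp
    with r sg show "z \<in> {F (\<rho>, t) | \<rho> t. \<rho> \<in> I \<and> singular_at F (\<rho>, t)}" by blast
  qed
  show ?thesis using part1 part2 by blast
qed

end
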